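(* Let $\mathrm{Lab}$ be a labelling system on a finite simplicial tree $T$ with index set $\{1,\dots,N\}$, and let $T_{\mathrm{spl}}$ be the union of the useful edges of $T$. If $T_{\mathrm{spl}}$ is nonempty, then $\bigcup_{v\in T_{\mathrm{spl}}}\mathrm{Lab}(v)=\{1,\dots,N\}$, the union being over vertices $v$ of $T_{\mathrm{spl}}$.
   Context: A labelling system on a finite simplicial tree $T$ assigns to each vertex $v$ a subset $\mathrm{Lab}(v)\subset\{1,\dots,N\}$ such that (A) $\mathrm{Lab}(a)\cap\mathrm{Lab}(b)\subset\mathrm{Lab}(x)$ whenever $x$ is a vertex on the shortest path between vertices $a,b$, and (B) $\bigcup_v\mathrm{Lab}(v)=\{1,\dots,N\}$. Removing the open edge $e$ leaves two closed connected components $T^+(e)$, $T^-(e)$. The edge $e$ is useless if $\bigcup_{v\in T^+(e)}\mathrm{Lab}(v)$ or $\bigcup_{v\in T^-(e)}\mathrm{Lab}(v)$ equals $\{1,\dots,N\}$, and useful otherwise. *)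

theory Defs
  imports Main
begin

definition simple_graph :: "'a set \<Rightarrow> ('a \<Rightarrow> 'a \<Rightarrow> bool) \<Rightarrow> bool" where
  "simple_graph V E \<longleftrightarrow> finite V \<and> (\<forall>x y. E x y \<longrightarrow> x \<in> V \<and> y \<in> V)
     \<and> (\<forall>x y. E x y \<longrightarrow> E y x) \<and> (\<forall>x. \<not> E x x)"

definition walk :: "('a \<Rightarrow> 'a \<Rightarrow> bool) \<Rightarrow> 'a list \<Rightarrow> 'a \<Rightarrow> 'a \<Rightarrow> bool" where
  "walk E p a b \<longleftrightarrow> p \<noteq> [] \<and> hd p = a \<and> last p = b
     \<and> (\<forall>i. Suc i < length p \<longrightarrow> E (p ! i) (p ! Suc i))"

definition is_cycle :: "('a \<Rightarrow> 'a \<Rightarrow> bool) \<Rightarrow> 'a list \<Rightarrow> bool" where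
  "is_cycle E c \<longleftrightarrow> length c \<ge> 3 \<and> distinct c
     \<and> (\<forall>i. Suc i < length c \<longrightarrow> E (c ! i) (c ! Suc i)) \<and> E (last c) (hd c)"

definition connected_graph :: "'a set \<Rightarrow> ('a \<Rightarrow> 'a \<Rightarrow> bool) \<Rightarrow> bool" where
  "connected_graph V E \<longleftrightarrow> (\<forall>a\<in>V. \<forall>b\<in>V. \<exists>p. walk E p a b)"

definition finite_tree :: "'a set \<Rightarrow> ('a \<Rightarrow> 'a \<Rightarrow> bool) \<Rightarrow> bool" where
  "finite_tree V E \<longleftrightarrow> simple_graph V E \<and> V \<noteq> {} \<and> connected_graph V E
     \<and> (\<nexists>c. is_cycle E c)"

definition on_geodesic :: "('a \<Rightarrow> 'a \<Rightarrow> bool) \<Rightarrow> 'a \<Rightarrow> 'a \<Rightarrow> 'a \<Rightarrow> bool" where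
  "on_geodesic E a b x \<longleftrightarrow> (\<exists>p. walk E p a b \<and> (\<forall>q. walk E q a b \<longrightarrow> length p \<le> length q)
     \<and> x \<in> set p)"

definition labelling_system ::
  "'a set \<Rightarrow> ('a \<Rightarrow> 'a \<Rightarrow> bool) \<Rightarrow> nat \<Rightarrow> ('a \<Rightarrow> nat set) \<Rightarrow> bool" where
  "labelling_system V E N Lab \<longleftrightarrow>
     (\<forall>a\<in>V. \<forall>b\<in>V. \<forall>x\<in>V. on_geodesic E a b x \<longrightarrow> Lab a \<inter> Lab b \<subseteq> Lab x)
     \<and> (\<Union>v\<in>V. Lab v) = {1..N}"

definition remove_edge :: "('a \<Rightarrow> 'a \<Rightarrow> bool) \<Rightarrow> 'a \<Rightarrow> 'a \<Rightarrow> 'a \<Rightarrow> 'a \<Rightarrow> bool" where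
  "remove_edge E u v x y \<longleftrightarrow> E x y \<and> {x, y} \<noteq> {u, v}"

text \<open>The closed component containing u of T minus the open edge {u,v}.\<close>
definition side :: "('a \<Rightarrow> 'a \<Rightarrow> bool) \<Rightarrow> 'a \<Rightarrow> 'a \<Rightarrow> 'a set" where
  "side E u v = {w. (remove_edge E u v)\<^sup>*\<^sup>* u w}"

definition useful_edge ::
  "('a \<Rightarrow> 'a \<Rightarrow> bool) \<Rightarrow> nat \<Rightarrow> ('a \<Rightarrow> nat set) \<Rightarrow> 'a \<Rightarrow> 'a \<Rightarrow> bool" where
  "useful_edge E N Lab u v \<longleftrightarrow> E u v
     \<and> (\<Union>w\<in>side E u v. Lab w) \<noteq> {1..N} \<and> (\<Union>w\<in>side E v u. Lab w) \<noteq> {1..N}"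

definition T_spl_vertices ::
  "('a \<Rightarrow> 'a \<Rightarrow> bool) \<Rightarrow> nat \<Rightarrow> ('a \<Rightarrow> nat set) \<Rightarrow> 'a set" where
  "T_spl_vertices E N Lab = {w. \<exists>u v. useful_edge E N Lab u v \<and> (w = u \<or> w = v)}"

end

theory Submission
  imports Defs "HOL-Library.Transitive_Closure_Table"
begin

lemma walk_cons2:
  "walk E (x # y # q) a b \<longleftrightarrow> x = a \<and> E x y \<and> walk E (y # q) y b"
proof
  assume h: "walk E (x # y # q) a b"
  have "E x y" using h unfolding walk_def by (metis length_Cons nth_Cons_0 nth_Cons_Suc zero_less_Suc Suc_less_eq)
  moreover have "\<forall>i. Suc i < length (y#q) \<longrightarrow> E ((y#q) ! i) ((y#q) ! Suc i)"
  proof (intro allI impI)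
    fix i assume "Suc i < length (y#q)"
    hence "Suc (Suc i) < length (x#y#q)" by simp
    hence "E ((x#y#q) ! Suc i) ((x#y#q) ! Suc (Suc i))" using h unfolding walk_def by blast
    thus "E ((y#q) ! i) ((y#q) ! Suc i)" by simp
  qed
  ultimately show "x = a \<and> E x y \<and> walk E (y # q) y b" using h unfolding walk_def by auto
next
  assume h: "x = a \<and> E x y \<and> walk E (y # q) y b"
  have "\<forall>i. Suc i < length (x#y#q) \<longrightarrow> E ((x#y#q) ! i) ((x#y#q) ! Suc i)"
  proof (intro allI impI)
    fix i assume i: "Suc i < length (x#y#q)"
    show "E ((x#y#q) ! i) ((x#y#q) ! Suc i)"
    proof (cases i)
      case 0 thus ?thesis using h by auto
    next
      case (Suc j)
      hence "Suc j < length (y#q)" using i by simp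
      hence "E ((y#q) ! j) ((y#q) ! Suc j)" using h unfolding walk_def by blast
      thus ?thesis using Suc by simp
    qed
  qed
  thus "walk E (x # y # q) a b" using h unfolding walk_def by auto
qed

lemma walk_path: "walk E (a # xs) a b \<longleftrightarrow> rtrancl_path E a xs b"
proof (induction xs arbitrary: a)
  case Nil
  show ?case unfolding walk_def by (auto intro: rtrancl_path.base elim: rtrancl_path.cases)
next
  case (Cons y ys)
  show ?case using Cons.IH[of y] walk_cons2[of E a y ys a b]
    by (auto intro: rtrancl_path.step elim: rtrancl_path.cases)
qed

lemma walk_iff: "walk E p a b \<longleftrightarrow> (\<exists>xs. p = a # xs \<and> rtrancl_path E a xs b)"
proof
  assume "walk E p a b"
  then obtain xs where "p = a # xs" unfolding walk_def by (cases p) auto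
  thus "\<exists>xs. p = a # xs \<and> rtrancl_path E a xs b" using \<open>walk E p a b\<close> walk_path by metis
next
  assume "\<exists>xs. p = a # xs \<and> rtrancl_path E a xs b"
  thus "walk E p a b" using walk_path by metis
qed

lemma path_nth: "rtrancl_path R a xs b \<Longrightarrow> Suc i < length (a#xs) \<Longrightarrow> R ((a#xs)!i) ((a#xs)! Suc i)"
  using walk_path[of R a xs b] unfolding walk_def by blast

lemma path_last: "rtrancl_path R a xs b \<Longrightarrow> last (a#xs) = b"
  using walk_path[of R a xs b] unfolding walk_def by blast

lemma path_mono: "rtrancl_path R a xs b \<Longrightarrow> (\<And>x y. R x y \<Longrightarrow> S x y) \<Longrightarrow> rtrancl_path S a xs b"
  by (induction rule: rtrancl_path.induct) (auto intro: rtrancl_path.intros)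

lemma side_refl: "u \<in> side E u v" unfolding side_def by simp

lemma side_subset:
  assumes "simple_graph V E" "u \<in> V" shows "side E u v \<subseteq> V"
proof
  fix w assume "w \<in> side E u v"
  hence "(remove_edge E u v)\<^sup>*\<^sup>* u w" unfolding side_def by simp
  thus "w \<in> V" by (induction rule: rtranclp_induct)
     (use assms in \<open>auto simp: remove_edge_def simple_graph_def\<close>)
qed

lemma side_step: "w \<in> side E u v \<Longrightarrow> E w w' \<Longrightarrow> {w, w'} \<noteq> {u, v} \<Longrightarrow> w' \<in> side E u v"
  unfolding side_def remove_edge_def by (auto intro: rtranclp.rtrancl_into_rtrancl)

lemma side_not_other:
  assumes T: "finite_tree V E" and ab: "E a b"
  shows "b \<notin> side E a b"
proof
  assume "b \<in> side E a b"
  hence "(remove_edge E a b)\<^sup>*\<^sup>* a b" unfolding side_def by simp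
  then obtain xs where "rtrancl_path (remove_edge E a b) a xs b" using rtranclp_eq_rtrancl_path by metis
  then obtain ys where p: "rtrancl_path (remove_edge E a b) a ys b" and d: "distinct (a # ys)"
    by (rule rtrancl_path_distinct)
  have sg: "simple_graph V E" using T unfolding finite_tree_def by simp
  have ne: "a \<noteq> b" using ab sg unfolding simple_graph_def by blast
  have pE: "rtrancl_path E a ys b" using p by (rule path_mono) (simp add: remove_edge_def)
  have "ys \<noteq> []" using p ne by (auto elim: rtrancl_path.cases)
  moreover have "ys \<noteq> [b]"
  proof
    assume "ys = [b]"
    with p have "remove_edge E a b a b" by (auto elim: rtrancl_path.cases)
    thus False unfolding remove_edge_def by simp
  qed
  ultimately have len: "length (a # ys) \<ge> 3"
  proof -
    have "last (a # ys) = b" by (rule path_last[OF pE])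
    hence "ys \<noteq> [c]" if "c \<noteq> b" for c using that by auto
    with \<open>ys \<noteq> []\<close> \<open>ys \<noteq> [b]\<close> have "length ys \<ge> 2"
      by (cases ys; cases "tl ys") auto
    thus ?thesis by simp
  qed
  have c1: "\<forall>i. Suc i < length (a # ys) \<longrightarrow> E ((a # ys) ! i) ((a # ys) ! Suc i)"
    using path_nth[OF pE] by blast
  have c2: "E (last (a # ys)) (hd (a # ys))"
    using path_last[OF pE] ab sg unfolding simple_graph_def by simp
  have "is_cycle E (a # ys)"
    unfolding is_cycle_def using len d c1 c2 by blast
  thus False using T unfolding finite_tree_def by blast
qed

lemma walk_cross:
  assumes "rtrancl_path E y xs z" "E a b" "y \<in> side E a b" "z \<notin> side E a b"
  shows "a \<in> set (y # xs)"
  using assms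
proof (induction rule: rtrancl_path.induct)
  case (base x) thus ?case by simp
next
  case (step x y' ys z)
  show ?case
  proof (cases "y' \<in> side E a b")
    case True thus ?thesis using step by auto
  next
    case False
    hence "{x, y'} = {a, b}" using side_step[of x E a b y'] step by blast
    moreover have "a \<in> side E a b" by (rule side_refl)
    ultimately have "x = a" using False by (auto simp: doubleton_eq_iff)
    thus ?thesis by simp
  qed
qed

lemma convex:
  assumes T: "finite_tree V E" and L: "labelling_system V E N Lab" and ab: "E a b"
    and y: "y \<in> V" "y \<in> side E a b" and z: "z \<in> V" "z \<notin> side E a b"
  shows "Lab y \<inter> Lab z \<subseteq> Lab a"
proof -
  have "\<exists>p. walk E p y z" using T y z unfolding finite_tree_def connected_graph_def by blast
  then obtain p0 where "walk E p0 y z" by blast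
  then obtain p where p: "walk E p y z" and pmin: "\<forall>q. walk E q y z \<longrightarrow> length p \<le> length q"
    using ex_has_least_nat[of "\<lambda>p. walk E p y z" p0 length] by blast
  then obtain xs where "p = y # xs" "rtrancl_path E y xs z" using walk_iff by metis
  hence "a \<in> set p" using walk_cross ab y z by metis
  hence "on_geodesic E y z a" unfolding on_geodesic_def using p pmin by blast
  moreover have "a \<in> V" using T ab unfolding finite_tree_def simple_graph_def by blast
  ultimately show ?thesis using L y z unfolding labelling_system_def by blast
qed

lemma side_mono:
  assumes T: "finite_tree V E" and ab: "E a b" and bc: "E b c" and ca: "c \<noteq> a"
  shows "side E c b \<subseteq> side E b a"
proof
  fix x assume "x \<in> side E c b"
  hence r: "(remove_edge E c b)\<^sup>*\<^sup>* c x" unfolding side_def by simp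
  have sg: "simple_graph V E" using T unfolding finite_tree_def by simp
  have cb: "E c b" using bc sg unfolding simple_graph_def by blast
  have nb: "b \<notin> side E c b" by (rule side_not_other[OF T cb])
  have "(remove_edge E b a)\<^sup>*\<^sup>* c x \<and> x \<in> side E c b" using r
  proof (induction rule: rtranclp_induct)
    case base thus ?case by (simp add: side_refl)
  next
    case (step y w)
    have yb: "y \<noteq> b" using step nb by blast
    have ya: "y \<noteq> a"
    proof
      assume "y = a"
      hence "E y b" using ab by simp
      moreover have "{y, b} \<noteq> {c, b}" using \<open>y = a\<close> ca by (auto simp: doubleton_eq_iff)
      ultimately have "b \<in> side E c b" using side_step step by metis
      thus False using nb by simp
    qed
    have "remove_edge E b a y w" using step(2) ya yb unfolding remove_edge_def by (auto simp: doubleton_eq_iff)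
    moreover have "w \<in> side E c b" using step unfolding side_def by (auto intro: rtranclp.rtrancl_into_rtrancl)
    ultimately show ?case using step by (auto intro: rtranclp.rtrancl_into_rtrancl)
  qed
  moreover have "remove_edge E b a b c" using bc ca unfolding remove_edge_def by (auto simp: doubleton_eq_iff)
  ultimately show "x \<in> side E b a" unfolding side_def by (auto intro: converse_rtranclp_into_rtranclp)
qed

lemma side_neighbor:
  assumes "w \<in> side E b a"
  shows "w = b \<or> (\<exists>c. E b c \<and> c \<noteq> a \<and> w \<in> side E c b)"
proof -
  have "(remove_edge E b a)\<^sup>*\<^sup>* b w" using assms unfolding side_def by simp
  thus ?thesis
  proof (induction rule: rtranclp_induct)
    case base thus ?case by simp
  next
    case (step w w')
    from step(2) have E: "E w w'" and ne: "{w, w'} \<noteq> {b, a}" unfolding remove_edge_def by auto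
    from step(3) show ?case
    proof
      assume "w = b"
      thus ?thesis using E ne side_refl[of w' E b] by (auto simp: doubleton_eq_iff)
    next
      assume "\<exists>c. E b c \<and> c \<noteq> a \<and> w \<in> side E c b"
      then obtain c where c: "E b c" "c \<noteq> a" "w \<in> side E c b" by blast
      show ?thesis
      proof (cases "{w, w'} = {c, b}")
        case True
        hence "w' = b \<or> w' = c" by (auto simp: doubleton_eq_iff)
        thus ?thesis using c side_refl[of c E b] by blast
      next
        case False thus ?thesis using c side_step[OF c(3) E] by blast
      qed
    qed
  qed
qed

lemma cover_sides:
  assumes "E\<^sup>*\<^sup>* u w"
  shows "w \<in> side E u v \<union> side E v u"
  using assms
proof (induction rule: rtranclp_induct)
  case base thus ?case by (simp add: side_refl)
next
  case (step y w)
  show ?case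
  proof (cases "{y, w} = {u, v}")
    case True thus ?thesis using side_refl[of u E v] side_refl[of v E u] by (auto simp: doubleton_eq_iff)
  next
    case False
    hence "{y, w} \<noteq> {v, u}" by (auto simp: doubleton_eq_iff)
    thus ?thesis using step side_step[of y E u v w] side_step[of y E v u w] False by blast
  qed
qed


theorem mainTheorem12:
  fixes V :: "'a set" and E :: "'a \<Rightarrow> 'a \<Rightarrow> bool" and N :: nat and Lab :: "'a \<Rightarrow> nat set"
  assumes "finite_tree V E"
    and "labelling_system V E N Lab"
    and "T_spl_vertices E N Lab \<noteq> {}"
  shows "(\<Union>v\<in>T_spl_vertices E N Lab. Lab v) = {1..N}"
proof -
  note T = assms(1) and L = assms(2)
  have sg: "simple_graph V E" using T unfolding finite_tree_def by simp
  have EV: "E x y \<Longrightarrow> x \<in> V \<and> y \<in> V" for x y using sg unfolding simple_graph_def by blast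
  have Esym: "E x y \<Longrightarrow> E y x" for x y using sg unfolding simple_graph_def by blast
  have finV: "finite V" using sg unfolding simple_graph_def by blast
  have LV: "(\<Union>v\<in>V. Lab v) = {1..N}" using L unfolding labelling_system_def by blast
  have sideU: "(\<Union>x\<in>side E p q. Lab x) \<subseteq> {1..N}" if "p \<in> V" for p q
    using side_subset[OF sg that, of q] LV by blast
  have TV: "T_spl_vertices E N Lab \<subseteq> V"
    unfolding T_spl_vertices_def useful_edge_def using EV by blast
  show ?thesis
  proof
    show "(\<Union>v\<in>T_spl_vertices E N Lab. Lab v) \<subseteq> {1..N}" using TV LV by blast
  next
    show "{1..N} \<subseteq> (\<Union>v\<in>T_spl_vertices E N Lab. Lab v)"
    proof
      fix i assume i: "i \<in> {1..N}"
      obtain w where w: "w \<in> V" "i \<in> Lab w" using i LV by blast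
      obtain u v where uv: "useful_edge E N Lab u v"
        using assms(3) unfolding T_spl_vertices_def by blast
      have uT: "u \<in> T_spl_vertices E N Lab" and vT: "v \<in> T_spl_vertices E N Lab"
        using uv unfolding T_spl_vertices_def by blast+
      define Q where "Q a b \<longleftrightarrow> E a b \<and> (\<Union>x\<in>side E b a. Lab x) \<noteq> {1..N} \<and> i \<notin> Lab a
         \<and> (\<exists>w\<in>side E b a. i \<in> Lab w)" for a b
      have key: "\<forall>a b. card (side E b a) = n \<longrightarrow> Q a b \<longrightarrow> (\<exists>x\<in>T_spl_vertices E N Lab. i \<in> Lab x)" for n
      proof (induction n rule: less_induct)
        case (less n)
        show ?case
        proof (intro allI impI)
          fix a b assume n: "card (side E b a) = n" and q: "Q a b"
          have ab: "E a b" and aV: "a \<in> V" and bV: "b \<in> V" using q EV unfolding Q_def by blast+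
          show "\<exists>x\<in>T_spl_vertices E N Lab. i \<in> Lab x"
          proof (cases "i \<in> Lab b")
            case True
            have nb: "b \<notin> side E a b" by (rule side_not_other[OF T ab])
            have "i \<notin> (\<Union>x\<in>side E a b. Lab x)"
            proof
              assume "i \<in> (\<Union>x\<in>side E a b. Lab x)"
              then obtain x where x: "x \<in> side E a b" "i \<in> Lab x" by blast
              have "x \<in> V" using side_subset[OF sg aV] x by blast
              hence "Lab x \<inter> Lab b \<subseteq> Lab a" using convex[OF T L ab _ x(1) bV nb] by blast
              thus False using x True q unfolding Q_def by blast
            qed
            hence "useful_edge E N Lab a b" using q i unfolding Q_def useful_edge_def by blast
            hence "b \<in> T_spl_vertices E N Lab" unfolding T_spl_vertices_def by blast
            thus ?thesis using True by blast
          next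
            case False
            obtain w where w: "w \<in> side E b a" "i \<in> Lab w" using q unfolding Q_def by blast
            have "w \<noteq> b" using w False by blast
            then obtain c where c: "E b c" "c \<noteq> a" "w \<in> side E c b" using side_neighbor[OF w(1)] by blast
            have sub: "side E c b \<subseteq> side E b a" by (rule side_mono[OF T ab c(1) c(2)])
            have cV: "c \<in> V" using EV c(1) by blast
            have "(\<Union>x\<in>side E c b. Lab x) \<noteq> {1..N}"
            proof
              assume "(\<Union>x\<in>side E c b. Lab x) = {1..N}"
              hence "(\<Union>x\<in>side E b a. Lab x) = {1..N}" using sub sideU[OF bV, of a] by blast
              thus False using q unfolding Q_def by blast
            qed
            hence qbc: "Q b c" unfolding Q_def using c False w by blast
            have "b \<notin> side E c b" by (rule side_not_other[OF T Esym[OF c(1)]])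
            hence "side E c b \<subset> side E b a" using sub side_refl[of b E a] by blast
            moreover have "finite (side E b a)" using side_subset[OF sg bV] finV finite_subset by blast
            ultimately have "card (side E c b) < n" using n psubset_card_mono by blast
            thus ?thesis using less qbc by blast
          qed
        qed
      qed
      show "i \<in> (\<Union>v\<in>T_spl_vertices E N Lab. Lab v)"
      proof (cases "i \<in> Lab u \<or> i \<in> Lab v")
        case True thus ?thesis using uT vT by blast
      next
        case False
        have uV: "u \<in> V" using uv EV unfolding useful_edge_def by blast
        obtain p where "walk E p u w" using T uV w(1) unfolding finite_tree_def connected_graph_def by blast
        then obtain xs where "rtrancl_path E u xs w" using walk_iff by metis
        hence "E\<^sup>*\<^sup>* u w" using rtranclp_eq_rtrancl_path by metis
        hence ws: "w \<in> side E u v \<union> side E v u" by (rule cover_sides)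
        have "Q u v \<or> Q v u"
        proof (cases "w \<in> side E v u")
          case True thus ?thesis using uv False w unfolding Q_def useful_edge_def by blast
        next
          case f2: False
          hence "w \<in> side E u v" using ws by blast
          moreover have "E v u" using uv Esym unfolding useful_edge_def by blast
          ultimately show ?thesis using uv False w unfolding Q_def useful_edge_def by blast
        qed
        thus ?thesis using key by blast
      qed
    qed
  qed
qed

end
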